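(* Let $K$ be a finite set with $|K|\ge2$ and $X=2^K$, and let $f^{\mathcal{W}}:\mathcal{P}^n\to 2^K$ be a non-dictatorial voting by committees with committees $\mathcal{W}=\{\mathcal{W}_k\}_{k\in K}$. Then $f^{\mathcal{W}}$ is NOM if and only if for each $k\in K$: (i) $\bigcap_{M\in\mathcal{W}_k}M=\emptyset$, and (ii) $|M|\ge2$ for each $M\in\mathcal{W}_k$.
   Context: $N=\{1,\dots,n\}$, $n\ge2$. Alternatives are subsets of $K$; $\mathcal{P}$ is the set of all strict linear orders on $2^K$ (not necessarily separable); $t(P_i)\subseteq K$ is the top of $P_i$. A committee for $k$ is a non-empty set $\mathcal{W}_k$ of non-empty subsets of $N$ such that $M\in\mathcal{W}_k$ and $M\subseteq M'$ imply $M'\in\mathcal{W}_k$. The voting by committees $f^{\mathcal{W}}$ is defined by: $k\in f^{\mathcal{W}}(P)$ iff $\{i\in N:k\in t(P_i)\}\in\mathcal{W}_k$. A rule is dictatorial if there is $i$ with $f(P)=t(P_i)$ for all $P$. Option set $O(P_i)=\{f(P_i,P_{-i}):P_{-i}\in\mathcal{P}^{n-1}\}$. $P_i'$ is a manipulation at $P_i$ if $f(P_i',P_{-i})P_if(P_i,P_{-i})$ for some $P_{-i}$; it is obvious if the $P_i$-worst element of $O(P_i')$ is strictly $P_i$-better than that of $O(P_i)$, or the $P_i$-best element of $O(P_i')$ is strictly $P_i$-better than that of $O(P_i)$. NOM means no obvious manipulation exists. *)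

theory Defs
  imports Main
begin

text \<open>Voters are N = {1..n}. Alternatives are subsets of K.
  A preference is a strict linear order on Pow K, represented as a relation;
  (X, Y) \<in> P means X is strictly preferred to Y.\<close>

definition prefs :: "'k set \<Rightarrow> ('k set \<times> 'k set) set set" where
  "prefs K = {P. strict_linear_order_on (Pow K) P \<and> P \<subseteq> Pow K \<times> Pow K}"

definition voters :: "nat \<Rightarrow> nat set" where
  "voters n = {1..n}"

definition profiles :: "'k set \<Rightarrow> nat \<Rightarrow> (nat \<Rightarrow> ('k set \<times> 'k set) set) set" where
  "profiles K n = {P. \<forall>i\<in>voters n. P i \<in> prefs K}"

definition best :: "('a \<times> 'a) set \<Rightarrow> 'a set \<Rightarrow> 'a" where
  "best P S = (THE x. x \<in> S \<and> (\<forall>y\<in>S. y \<noteq> x \<longrightarrow> (x, y) \<in> P))"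

definition worst :: "('a \<times> 'a) set \<Rightarrow> 'a set \<Rightarrow> 'a" where
  "worst P S = (THE x. x \<in> S \<and> (\<forall>y\<in>S. y \<noteq> x \<longrightarrow> (y, x) \<in> P))"

definition top :: "'k set \<Rightarrow> ('k set \<times> 'k set) set \<Rightarrow> 'k set" where
  "top K P = best P (Pow K)"

definition committees :: "'k set \<Rightarrow> nat \<Rightarrow> ('k \<Rightarrow> nat set set) \<Rightarrow> bool" where
  "committees K n W \<longleftrightarrow> (\<forall>k\<in>K. W k \<noteq> {} \<and>
     (\<forall>M\<in>W k. M \<noteq> {} \<and> M \<subseteq> voters n) \<and>
     (\<forall>M M'. M \<in> W k \<longrightarrow> M \<subseteq> M' \<longrightarrow> M' \<subseteq> voters n \<longrightarrow> M' \<in> W k))"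

definition vbc :: "'k set \<Rightarrow> nat \<Rightarrow> ('k \<Rightarrow> nat set set)
    \<Rightarrow> (nat \<Rightarrow> ('k set \<times> 'k set) set) \<Rightarrow> 'k set" where
  "vbc K n W P = {k \<in> K. {i \<in> voters n. k \<in> top K (P i)} \<in> W k}"

definition dictatorial :: "'k set \<Rightarrow> nat \<Rightarrow> ((nat \<Rightarrow> ('k set \<times> 'k set) set) \<Rightarrow> 'k set) \<Rightarrow> bool" where
  "dictatorial K n f \<longleftrightarrow> (\<exists>i\<in>voters n. \<forall>P\<in>profiles K n. f P = top K (P i))"

definition option_set :: "'k set \<Rightarrow> nat \<Rightarrow> ((nat \<Rightarrow> ('k set \<times> 'k set) set) \<Rightarrow> 'k set)
    \<Rightarrow> nat \<Rightarrow> ('k set \<times> 'k set) set \<Rightarrow> 'k set set" where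
  "option_set K n f i Pi = {f (P(i := Pi)) | P. P \<in> profiles K n}"

definition manipulation :: "'k set \<Rightarrow> nat \<Rightarrow> ((nat \<Rightarrow> ('k set \<times> 'k set) set) \<Rightarrow> 'k set)
    \<Rightarrow> nat \<Rightarrow> ('k set \<times> 'k set) set \<Rightarrow> ('k set \<times> 'k set) set \<Rightarrow> bool" where
  "manipulation K n f i Pi Pi' \<longleftrightarrow>
     (\<exists>P\<in>profiles K n. (f (P(i := Pi')), f (P(i := Pi))) \<in> Pi)"

definition obvious_manipulation :: "'k set \<Rightarrow> nat \<Rightarrow> ((nat \<Rightarrow> ('k set \<times> 'k set) set) \<Rightarrow> 'k set)
    \<Rightarrow> nat \<Rightarrow> ('k set \<times> 'k set) set \<Rightarrow> ('k set \<times> 'k set) set \<Rightarrow> bool" where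
  "obvious_manipulation K n f i Pi Pi' \<longleftrightarrow> manipulation K n f i Pi Pi' \<and>
     ((worst Pi (option_set K n f i Pi'), worst Pi (option_set K n f i Pi)) \<in> Pi \<or>
      (best Pi (option_set K n f i Pi'), best Pi (option_set K n f i Pi)) \<in> Pi)"

definition NOM :: "'k set \<Rightarrow> nat \<Rightarrow> ((nat \<Rightarrow> ('k set \<times> 'k set) set) \<Rightarrow> 'k set) \<Rightarrow> bool" where
  "NOM K n f \<longleftrightarrow> (\<forall>i\<in>voters n. \<forall>Pi\<in>prefs K. \<forall>Pi'\<in>prefs K.
     \<not> obvious_manipulation K n f i Pi Pi')"

end

theory Submission
  imports Defs
begin


lemma asym_pref: assumes "P \<in> prefs K" "(x,y) \<in> P" shows "(y,x) \<notin> P"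
proof
  assume yx: "(y,x) \<in> P"
  have "trans P" "irrefl P" using assms(1) unfolding prefs_def strict_linear_order_on_def by auto
  then show False using assms(2) yx by (meson irreflD transD)
qed

lemma best_eq: assumes "P \<in> prefs K" "x \<in> S" "\<forall>y\<in>S. y \<noteq> x \<longrightarrow> (x,y) \<in> P"
  shows "best P S = x"
  unfolding best_def
proof (rule the_equality)
  show "x \<in> S \<and> (\<forall>y\<in>S. y \<noteq> x \<longrightarrow> (x,y) \<in> P)" using assms by simp
next
  fix z assume z: "z \<in> S \<and> (\<forall>y\<in>S. y \<noteq> z \<longrightarrow> (z,y) \<in> P)"
  show "z = x"
  proof (rule ccontr)
    assume "z \<noteq> x"
    then have "(z,x) \<in> P" "(x,z) \<in> P" using z assms by auto
    then show False using asym_pref[OF assms(1)] by blast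
  qed
qed

lemma conv_pref: "P \<in> prefs K \<Longrightarrow> converse P \<in> prefs K"
  unfolding prefs_def strict_linear_order_on_def by auto

lemma worst_best: "worst P S = best (converse P) S"
  unfolding worst_def best_def by simp

lemma best_exists: assumes "P \<in> prefs K" "finite S" "S \<noteq> {}" "S \<subseteq> Pow K"
  shows "\<exists>x\<in>S. \<forall>y\<in>S. y \<noteq> x \<longrightarrow> (x,y) \<in> P"
  using assms(2,3,4)
proof (induction S rule: finite_ne_induct)
  case (singleton x) then show ?case by simp
next
  case (insert a F)
  then obtain x where x: "x \<in> F" "\<forall>y\<in>F. y \<noteq> x \<longrightarrow> (x,y) \<in> P" by auto
  have tot: "total_on (Pow K) P" and tr: "trans P" using assms(1) unfolding prefs_def strict_linear_order_on_def by auto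
  have "a \<noteq> x" using insert x by auto
  moreover have "a \<in> Pow K" "x \<in> Pow K" using insert x by auto
  ultimately have "(a,x) \<in> P \<or> (x,a) \<in> P" using tot unfolding total_on_def by blast
  then show ?case
  proof
    assume ax: "(a,x) \<in> P"
    have "\<forall>y\<in>insert a F. y \<noteq> a \<longrightarrow> (a,y) \<in> P"
    proof (intro ballI impI)
      fix y assume "y \<in> insert a F" "y \<noteq> a"
      then have "y \<in> F" by simp
      show "(a,y) \<in> P"
      proof (cases "y = x")
        case True then show ?thesis using ax by simp
      next
        case False then have "(x,y) \<in> P" using x \<open>y \<in> F\<close> by blast
        then show ?thesis using ax tr by (meson transD)
      qed
    qed
    then show ?thesis by blast
  next
    assume "(x,a) \<in> P"
    then show ?thesis using x by auto
  qed
qed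

lemma best_in: assumes "P \<in> prefs K" "finite S" "S \<noteq> {}" "S \<subseteq> Pow K"
  shows "best P S \<in> S"
  using best_exists[OF assms] best_eq[OF assms(1)] by metis

lemma worst_in: assumes "P \<in> prefs K" "finite S" "S \<noteq> {}" "S \<subseteq> Pow K"
  shows "worst P S \<in> S"
  using best_in[OF conv_pref[OF assms(1)] assms(2-)] worst_best by metis

lemma top_sub: "finite K \<Longrightarrow> P \<in> prefs K \<Longrightarrow> top K P \<subseteq> K"
  unfolding top_def using best_in[of P K "Pow K"] by auto

lemma rank_pref: assumes "inj_on (g::'k set \<Rightarrow> nat) (Pow K)"
  shows "{(X,Y). X \<in> Pow K \<and> Y \<in> Pow K \<and> g X < g Y} \<in> prefs K"
  unfolding prefs_def strict_linear_order_on_def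
proof (intro CollectI conjI)
  show "trans {(X,Y). X \<in> Pow K \<and> Y \<in> Pow K \<and> g X < g Y}" unfolding trans_def by auto
  show "irrefl {(X,Y). X \<in> Pow K \<and> Y \<in> Pow K \<and> g X < g Y}" by (auto simp: irrefl_def)
  show "{(X,Y). X \<in> Pow K \<and> Y \<in> Pow K \<and> g X < g Y} \<subseteq> Pow K \<times> Pow K" by auto
  show "total_on (Pow K) {(X,Y). X \<in> Pow K \<and> Y \<in> Pow K \<and> g X < g Y}"
    unfolding total_on_def
  proof (intro ballI impI)
    fix X Y assume XY: "X \<in> Pow K" "Y \<in> Pow K" "X \<noteq> Y"
    then have "g X \<noteq> g Y" using inj_onD[OF assms] by blast
    then show "(X, Y) \<in> {(X,Y). X \<in> Pow K \<and> Y \<in> Pow K \<and> g X < g Y} \<or> (Y, X) \<in> {(X,Y). X \<in> Pow K \<and> Y \<in> Pow K \<and> g X < g Y}"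
      using XY by auto
  qed
qed

lemma mk_pref: assumes "finite K" "T \<subseteq> K" "B \<subseteq> K"
  shows "\<exists>P\<in>prefs K. top K P = T \<and> (T \<noteq> B \<longrightarrow> (\<forall>X\<in>Pow K. X \<noteq> B \<longrightarrow> (X,B) \<in> P))"
proof -
  obtain h :: "'a set \<Rightarrow> nat" and m where h: "h ` Pow K = {i. i < m}" "inj_on h (Pow K)"
    using finite_imp_inj_to_nat_seg[of "Pow K"] assms(1) by auto
  define g where "g X = (if X = T then 0 else if X = B then m + 1 else h X + 1)" for X
  have hb: "X \<in> Pow K \<Longrightarrow> h X < m" for X using h(1) by auto
  have inj: "inj_on g (Pow K)"
  proof (rule inj_onI)
    fix X Y assume XY: "X \<in> Pow K" "Y \<in> Pow K" "g X = g Y"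
    show "X = Y"
    proof (cases "X = T \<or> X = B \<or> Y = T \<or> Y = B")
      case True
      then show ?thesis using XY hb[OF XY(1)] hb[OF XY(2)] by (auto simp: g_def split: if_splits)
    next
      case False
      then have "h X = h Y" using XY by (simp add: g_def)
      then show ?thesis using inj_onD[OF h(2)] XY by blast
    qed
  qed
  define P where "P = {(X,Y). X \<in> Pow K \<and> Y \<in> Pow K \<and> g X < g Y}"
  have P: "P \<in> prefs K" unfolding P_def by (rule rank_pref[OF inj])
  have "top K P = T" unfolding top_def
    by (rule best_eq[OF P]) (use assms in \<open>auto simp: P_def g_def\<close>)
  moreover have "T \<noteq> B \<longrightarrow> (\<forall>X\<in>Pow K. X \<noteq> B \<longrightarrow> (X,B) \<in> P)"
    using assms hb unfolding P_def g_def by auto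
  ultimately show ?thesis using P by blast
qed



lemma com_up: "committees K n W \<Longrightarrow> k \<in> K \<Longrightarrow> M \<in> W k \<Longrightarrow> M \<subseteq> M' \<Longrightarrow> M' \<subseteq> voters n \<Longrightarrow> M' \<in> W k"
  unfolding committees_def by blast

lemma com_mem: "committees K n W \<Longrightarrow> k \<in> K \<Longrightarrow> M \<in> W k \<Longrightarrow> M \<noteq> {} \<and> M \<subseteq> voters n"
  unfolding committees_def by blast

lemma com_N: assumes "committees K n W" "k \<in> K" shows "voters n \<in> W k"
proof -
  obtain M where "M \<in> W k" using assms unfolding committees_def by blast
  then show ?thesis using com_up[OF assms, of M "voters n"] com_mem[OF assms] by blast
qed

lemma vbc_sub: "vbc K n W P \<subseteq> K" unfolding vbc_def by auto

lemma const_prof: assumes "Pt \<in> prefs K" "Q \<in> prefs K"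
  shows "(\<lambda>j. Pt)(i := Q) \<in> profiles K n" "(\<lambda>j. Pt) \<in> profiles K n"
  using assms unfolding profiles_def by auto

lemma achieve:
  assumes com: "committees K n W" and i: "i \<in> voters n" and w: "w \<subseteq> K"
    and Pw: "top K Pw = w" and t: "t = top K Q"
    and flex: "\<forall>k\<in>K. (k \<in> w \<and> k \<notin> t \<longrightarrow> voters n - {i} \<in> W k) \<and> (k \<in> t \<and> k \<notin> w \<longrightarrow> {i} \<notin> W k)"
  shows "vbc K n W ((\<lambda>j. Pw)(i := Q)) = w"
proof -
  have C: "{j \<in> voters n. k \<in> top K (((\<lambda>j. Pw)(i:=Q)) j)} =
    (if k \<in> t then (if k \<in> w then voters n else {i}) else (if k \<in> w then voters n - {i} else {}))" for k
    using i Pw t by auto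
  show ?thesis unfolding vbc_def C
  proof (intro set_eqI iffI)
    fix k assume "k \<in> {k \<in> K. (if k \<in> t then (if k \<in> w then voters n else {i}) else (if k \<in> w then voters n - {i} else {})) \<in> W k}"
    then have k: "k \<in> K" "(if k \<in> t then (if k \<in> w then voters n else {i}) else (if k \<in> w then voters n - {i} else {})) \<in> W k" by auto
    show "k \<in> w"
    proof (rule ccontr)
      assume "k \<notin> w"
      then show False using k flex com_mem[OF com k(1), of "{}"] by (auto split: if_splits)
    qed
  next
    fix k assume kw: "k \<in> w"
    then have "k \<in> K" using w by auto
    then show "k \<in> {k \<in> K. (if k \<in> t then (if k \<in> w then voters n else {i}) else (if k \<in> w then voters n - {i} else {})) \<in> W k}"
      using kw flex com_N[OF com] by auto
  qed
qed

lemma opt_all: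
  assumes fin: "finite K" and com: "committees K n W" and i: "i \<in> voters n" and Q: "Q \<in> prefs K"
    and R: "\<forall>k\<in>K. \<Inter>(W k) = {} \<and> (\<forall>M\<in>W k. card M \<ge> 2)"
  shows "option_set K n (vbc K n W) i Q = Pow K"
proof
  show "option_set K n (vbc K n W) i Q \<subseteq> Pow K"
  proof
    fix S assume "S \<in> option_set K n (vbc K n W) i Q"
    then obtain P where "S = vbc K n W (P(i := Q))" unfolding option_set_def by auto
    then show "S \<in> Pow K" using vbc_sub[of K n W "P(i:=Q)"] by simp
  qed
next
  show "Pow K \<subseteq> option_set K n (vbc K n W) i Q"
  proof
    fix S assume S: "S \<in> Pow K"
    obtain Ps where Ps: "Ps \<in> prefs K" "top K Ps = S" using mk_pref[OF fin, of S S] S by auto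
    have N1: "voters n - {i} \<in> W k" if k: "k \<in> K" for k
    proof -
      have "i \<notin> \<Inter>(W k)" using R k by auto
      then obtain M where M: "M \<in> W k" "i \<notin> M" by auto
      then show ?thesis using com_up[OF com k M(1), of "voters n - {i}"] com_mem[OF com k M(1)] by blast
    qed
    have N2: "X \<notin> W k" if k: "k \<in> K" and X: "X \<subseteq> {i}" for k X
    proof
      assume "X \<in> W k"
      then have "card X \<ge> 2" using R k by auto
      moreover have "card X \<le> 1" using card_mono[OF _ X] by simp
      ultimately show False by simp
    qed
    have "vbc K n W ((\<lambda>j. Ps)(i := Q)) = S"
      unfolding vbc_def
    proof (intro set_eqI iffI)
      fix k assume k: "k \<in> {k \<in> K. {j \<in> voters n. k \<in> top K (((\<lambda>j. Ps)(i := Q)) j)} \<in> W k}"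
      have kK: "k \<in> K" and kW: "{j \<in> voters n. k \<in> top K (((\<lambda>j. Ps)(i := Q)) j)} \<in> W k"
        using k by simp_all
      show "k \<in> S"
      proof (rule ccontr)
        assume kS: "k \<notin> S"
        have "{j \<in> voters n. k \<in> top K (((\<lambda>j. Ps)(i := Q)) j)} \<subseteq> {i}"
        proof
          fix j assume "j \<in> {j \<in> voters n. k \<in> top K (((\<lambda>j. Ps)(i := Q)) j)}"
          then have "k \<in> top K (((\<lambda>j. Ps)(i := Q)) j)" by simp
          then show "j \<in> {i}" using kS Ps(2) by (cases "j = i") simp_all
        qed
        from N2[OF kK this] kW show False by simp
      qed
    next
      fix k assume k: "k \<in> S"
      then have kK: "k \<in> K" using S by auto
      have "voters n - {i} \<subseteq> {j \<in> voters n. k \<in> top K (((\<lambda>j. Ps)(i := Q)) j)}" using Ps(2) k by auto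
      then have "{j \<in> voters n. k \<in> top K (((\<lambda>j. Ps)(i := Q)) j)} \<in> W k"
        using com_up[OF com kK N1[OF kK]] by simp
      then show "k \<in> {k \<in> K. {j \<in> voters n. k \<in> top K (((\<lambda>j. Ps)(i := Q)) j)} \<in> W k}" using kK by auto
    qed
    then show "S \<in> option_set K n (vbc K n W) i Q"
    proof -
      have "(\<lambda>j. Ps) \<in> profiles K n" using const_prof(2)[OF Ps(1) Q] .
      then show ?thesis unfolding option_set_def using \<open>vbc K n W ((\<lambda>j. Ps)(i := Q)) = S\<close> by blast
    qed
  qed
qed

lemma NOM_if:
  assumes fin: "finite K" and com: "committees K n W"
    and R: "\<forall>k\<in>K. \<Inter>(W k) = {} \<and> (\<forall>M\<in>W k. card M \<ge> 2)"
  shows "NOM K n (vbc K n W)"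
  unfolding NOM_def
proof (intro ballI notI)
  fix i Pi Pi' assume i: "i \<in> voters n" and Pi: "Pi \<in> prefs K" and Pi': "Pi' \<in> prefs K"
    and om: "obvious_manipulation K n (vbc K n W) i Pi Pi'"
  have eq: "option_set K n (vbc K n W) i Pi' = option_set K n (vbc K n W) i Pi"
    using opt_all[OF fin com i Pi R] opt_all[OF fin com i Pi' R] by simp
  have irr: "(x,x) \<notin> Pi" for x using Pi unfolding prefs_def strict_linear_order_on_def by (auto simp: irrefl_def)
  show False using om unfolding obvious_manipulation_def eq using irr by blast
qed



lemma not_NOM:
  assumes fin: "finite K" and com: "committees K n W" and i: "i \<in> voters n"
    and tK: "t \<subseteq> K" and wK: "w \<subseteq> K" and tw: "t \<noteq> w"
    and flex: "\<forall>k\<in>K. (k \<in> w \<and> k \<notin> t \<longrightarrow> voters n - {i} \<in> W k) \<and> (k \<in> t \<and> k \<notin> w \<longrightarrow> {i} \<notin> W k)"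
    and kb: "kb \<in> K"
    and pw: "({i} \<in> W kb \<and> kb \<notin> w) \<or> (voters n - {i} \<notin> W kb \<and> kb \<in> w)"
  shows "\<not> NOM K n (vbc K n W)"
proof
  assume nom: "NOM K n (vbc K n W)"
  define t' where "t' = (if {i} \<in> W kb \<and> kb \<notin> w then {kb} else {})"
  have t'K: "t' \<subseteq> K" using kb by (simp add: t'_def)
  obtain Pi where Pi: "Pi \<in> prefs K" "top K Pi = t" "\<forall>X\<in>Pow K. X \<noteq> w \<longrightarrow> (X,w) \<in> Pi"
    using mk_pref[OF fin tK wK] tw by blast
  obtain Pi' where Pi': "Pi' \<in> prefs K" "top K Pi' = t'"
    using mk_pref[OF fin t'K t'K] by blast
  obtain Pw where Pw: "Pw \<in> prefs K" "top K Pw = w"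
    using mk_pref[OF fin wK wK] by blast
  have P0: "(\<lambda>j. Pw) \<in> profiles K n" using const_prof(2)[OF Pw(1) Pw(1)] .
  have A: "vbc K n W ((\<lambda>j. Pw)(i := Pi)) = w"
    by (rule achieve[OF com i wK Pw(2) Pi(2)[symmetric] flex])
  have B: "vbc K n W (P(i := Pi')) \<noteq> w" if P: "P \<in> profiles K n" for P
  proof (cases "{i} \<in> W kb \<and> kb \<notin> w")
    case True
    then have t': "t' = {kb}" by (simp add: t'_def)
    have "{i} \<subseteq> {j \<in> voters n. kb \<in> top K ((P(i := Pi')) j)}" using i Pi'(2) t' by simp
    moreover have "{j \<in> voters n. kb \<in> top K ((P(i := Pi')) j)} \<subseteq> voters n" by blast
    ultimately have "{j \<in> voters n. kb \<in> top K ((P(i := Pi')) j)} \<in> W kb"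
      using com_up[OF com kb] True by blast
    then have "kb \<in> vbc K n W (P(i := Pi'))" using kb unfolding vbc_def by simp
    then show ?thesis using True by blast
  next
    case False
    then have t': "t' = {}" and F: "voters n - {i} \<notin> W kb" "kb \<in> w" using pw by (auto simp: t'_def)
    have "{j \<in> voters n. kb \<in> top K ((P(i := Pi')) j)} \<subseteq> voters n - {i}" using Pi'(2) t' by auto
    then have "{j \<in> voters n. kb \<in> top K ((P(i := Pi')) j)} \<notin> W kb"
      using com_up[OF com kb, of _ "voters n - {i}"] F(1) by blast
    then have "kb \<notin> vbc K n W (P(i := Pi'))" unfolding vbc_def by simp
    then show ?thesis using F(2) by blast
  qed
  let ?O = "option_set K n (vbc K n W) i Pi"
  let ?O' = "option_set K n (vbc K n W) i Pi'"
  have OK: "?O \<subseteq> Pow K" "?O' \<subseteq> Pow K"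
    unfolding option_set_def using vbc_sub[of K n W] by auto
  have wO: "w \<in> ?O" unfolding option_set_def using P0 A by (auto intro!: exI[of _ "\<lambda>j. Pw"])
  have worstO: "worst Pi ?O = w"
    unfolding worst_best
    by (rule best_eq[OF conv_pref[OF Pi(1)] wO]) (use OK Pi(3) in auto)
  have O'ne: "vbc K n W ((\<lambda>j. Pw)(i := Pi')) \<in> ?O'"
    unfolding option_set_def using P0 by (auto intro!: exI[of _ "\<lambda>j. Pw"])
  have finO': "finite ?O'" using OK(2) fin by (meson finite_Pow_iff finite_subset)
  have xO': "worst Pi ?O' \<in> ?O'" using worst_in[OF Pi(1) finO' _ OK(2)] O'ne by blast
  have xw: "worst Pi ?O' \<noteq> w"
  proof -
    obtain P where "worst Pi ?O' = vbc K n W (P(i := Pi'))" "P \<in> profiles K n"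
      using xO' unfolding option_set_def by auto
    then show ?thesis using B by simp
  qed
  have xP: "worst Pi ?O' \<in> Pow K" using xO' OK(2) by blast
  have worse: "(worst Pi ?O', worst Pi ?O) \<in> Pi" unfolding worstO using Pi(3) xw xP by blast
  have man: "manipulation K n (vbc K n W) i Pi Pi'"
    unfolding manipulation_def
  proof (rule bexI[OF _ P0])
    have "vbc K n W ((\<lambda>j. Pw)(i := Pi')) \<noteq> w" using B[OF P0] .
    moreover have "vbc K n W ((\<lambda>j. Pw)(i := Pi')) \<in> Pow K" using vbc_sub[of K n W] by auto
    ultimately show "(vbc K n W ((\<lambda>j. Pw)(i := Pi')), vbc K n W ((\<lambda>j. Pw)(i := Pi))) \<in> Pi"
      using A Pi(3) by simp
  qed
  have "obvious_manipulation K n (vbc K n W) i Pi Pi'"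
    unfolding obvious_manipulation_def using man worse by blast
  then show False using nom i Pi(1) Pi'(1) unfolding NOM_def by blast
qed

lemma dict:
  assumes fin: "finite K" and com: "committees K n W" and i: "i \<in> voters n"
    and D: "\<forall>k\<in>K. {i} \<in> W k \<and> voters n - {i} \<notin> W k"
  shows "dictatorial K n (vbc K n W)"
  unfolding dictatorial_def
proof (intro bexI[OF _ i] ballI)
  fix P assume P: "P \<in> profiles K n"
  then have Pi: "P i \<in> prefs K" using i unfolding profiles_def by blast
  have tK: "top K (P i) \<subseteq> K" using top_sub[OF fin Pi] .
  show "vbc K n W P = top K (P i)"
  proof (intro set_eqI iffI)
    fix x assume "x \<in> vbc K n W P"
    then have x: "x \<in> K" "{j \<in> voters n. x \<in> top K (P j)} \<in> W x" unfolding vbc_def by auto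
    show "x \<in> top K (P i)"
    proof (rule ccontr)
      assume "x \<notin> top K (P i)"
      then have "{j \<in> voters n. x \<in> top K (P j)} \<subseteq> voters n - {i}" by auto
      then have "voters n - {i} \<in> W x" using com_up[OF com x(1) x(2)] by blast
      then show False using D x(1) by blast
    qed
  next
    fix x assume x: "x \<in> top K (P i)"
    then have xK: "x \<in> K" using tK by blast
    have "{i} \<subseteq> {j \<in> voters n. x \<in> top K (P j)}" using i x by simp
    then have "{j \<in> voters n. x \<in> top K (P j)} \<in> W x"
      using com_up[OF com xK, of "{i}"] D xK by blast
    then show "x \<in> vbc K n W P" using xK unfolding vbc_def by simp
  qed
qed

theorem theorem4:
  fixes K :: "'k set" and n :: nat and W :: "'k \<Rightarrow> nat set set"
  assumes "finite K" and "card K \<ge> 2" and "n \<ge> 2"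
    and "committees K n W"
    and "\<not> dictatorial K n (vbc K n W)"
  shows "NOM K n (vbc K n W) \<longleftrightarrow>
    (\<forall>k\<in>K. \<Inter>(W k) = {} \<and> (\<forall>M\<in>W k. card M \<ge> 2))"
proof
  assume R: "\<forall>k\<in>K. \<Inter>(W k) = {} \<and> (\<forall>M\<in>W k. card M \<ge> 2)"
  show "NOM K n (vbc K n W)" by (rule NOM_if[OF assms(1) assms(4) R])
next
  assume nom: "NOM K n (vbc K n W)"
  note fin = assms(1) and com = assms(4)
  show "\<forall>k\<in>K. \<Inter>(W k) = {} \<and> (\<forall>M\<in>W k. card M \<ge> 2)"
  proof (rule ccontr)
    assume "\<not> ?thesis"
    then obtain k0 where k0: "k0 \<in> K" and viol: "\<Inter>(W k0) \<noteq> {} \<or> (\<exists>M\<in>W k0. card M < 2)"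
      by (auto simp: not_le)
    obtain i where i: "i \<in> voters n" and pw0: "{i} \<in> W k0 \<or> voters n - {i} \<notin> W k0"
    proof (cases "\<Inter>(W k0) \<noteq> {}")
      case True
      then obtain j where j: "j \<in> \<Inter>(W k0)" by blast
      obtain M where M: "M \<in> W k0" using com k0 unfolding committees_def by blast
      have jN: "j \<in> voters n" using j M com_mem[OF com k0 M] by blast
      have "voters n - {j} \<notin> W k0" using j by blast
      then show ?thesis using that jN by blast
    next
      case False
      then obtain M where M: "M \<in> W k0" "card M < 2" using viol by blast
      have "M \<noteq> {}" "M \<subseteq> voters n" using com_mem[OF com k0 M(1)] by auto
      moreover have "finite M" using \<open>M \<subseteq> voters n\<close> finite_subset unfolding voters_def by blast
      ultimately have "card M \<noteq> 0" by simp
      then have "card M = 1" using M(2) by linarith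
      then obtain a where "M = {a}" by (meson card_1_singletonE)
      then show ?thesis using that M(1) \<open>M \<subseteq> voters n\<close> by blast
    qed
    have nd: "\<exists>k\<in>K. \<not> ({i} \<in> W k \<and> voters n - {i} \<notin> W k)"
      using dict[OF fin com i] assms(5) by blast
    obtain ka kb where kab: "ka \<in> K" "kb \<in> K" "ka \<noteq> kb"
      and nda: "\<not> ({i} \<in> W ka \<and> voters n - {i} \<notin> W ka)"
      and pwb: "{i} \<in> W kb \<or> voters n - {i} \<notin> W kb"
    proof -
      obtain k where k: "k \<in> K" "\<not> ({i} \<in> W k \<and> voters n - {i} \<notin> W k)" using nd by blast
      show ?thesis
      proof (cases "k = k0")
        case False
        then show ?thesis using that k k0 pw0 by blast
      next
        case True
        have "\<exists>k1\<in>K. k1 \<noteq> k0"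
        proof (rule ccontr)
          assume "\<not> (\<exists>k1\<in>K. k1 \<noteq> k0)"
          then have "K \<subseteq> {k0}" by blast
          then have "card K \<le> 1" using card_mono[of "{k0}" K] by simp
          then show False using assms(2) by simp
        qed
        then obtain k1 where k1: "k1 \<in> K" "k1 \<noteq> k0" by blast
        show ?thesis
        proof (cases "{i} \<in> W k1 \<and> voters n - {i} \<notin> W k1")
          case True
          then show ?thesis using that[of k k1] k k1 \<open>k = k0\<close> by blast
        next
          case False
          then show ?thesis using that[of k1 k0] k0 k1 pw0 by blast
        qed
      qed
    qed
    define wb where "wb = (if {i} \<in> W kb then {} else {kb})"
    have wbK: "wb \<subseteq> K" using kab by (simp add: wb_def)
    have kawb: "ka \<notin> wb" using kab by (simp add: wb_def)
    show False
    proof (cases "{i} \<in> W ka")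
      case False
      have "\<not> NOM K n (vbc K n W)"
      proof (rule not_NOM[OF fin com i _ wbK _ _ kab(2)])
        show "insert ka wb \<subseteq> K" using wbK kab by simp
        show "insert ka wb \<noteq> wb" using kawb by blast
        show "\<forall>k\<in>K. (k \<in> wb \<and> k \<notin> insert ka wb \<longrightarrow> voters n - {i} \<in> W k) \<and>
            (k \<in> insert ka wb \<and> k \<notin> wb \<longrightarrow> {i} \<notin> W k)" using False by auto
        show "({i} \<in> W kb \<and> kb \<notin> wb) \<or> (voters n - {i} \<notin> W kb \<and> kb \<in> wb)"
          using pwb by (auto simp: wb_def)
      qed
      then show False using nom by blast
    next
      case True
      then have N1: "voters n - {i} \<in> W ka" using nda by blast
      have "\<not> NOM K n (vbc K n W)"
      proof (rule not_NOM[OF fin com i wbK _ _ _ kab(2)])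
        show "insert ka wb \<subseteq> K" using wbK kab by simp
        show "wb \<noteq> insert ka wb" using kawb by blast
        show "\<forall>k\<in>K. (k \<in> insert ka wb \<and> k \<notin> wb \<longrightarrow> voters n - {i} \<in> W k) \<and>
            (k \<in> wb \<and> k \<notin> insert ka wb \<longrightarrow> {i} \<notin> W k)" using N1 by auto
        show "({i} \<in> W kb \<and> kb \<notin> insert ka wb) \<or> (voters n - {i} \<notin> W kb \<and> kb \<in> insert ka wb)"
          using pwb kab by (auto simp: wb_def)
      qed
      then show False using nom by blast
    qed
  qed
qed

end
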